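(* Let $G$ be an infinite locally finite graph and let $F$ be a spanning subgraph of $G$ that is faithful to $G$. If $F$ has a Hamiltonian circle, then $G$ has a Hamiltonian circle.
   Context: A ray is a one-way infinite path; two rays of a graph $H$ are equivalent in $H$ if for every finite $S\subseteq V(H)$ some component of $H-S$ contains tails of both; the classes are the ends of $H$. For finite $S$ and an end $\alpha$, $C(S,\alpha)$ is the component of $H-S$ containing tails of rays of $\alpha$. The Freudenthal compactification $|H|$ is the 1-complex of $H$ together with its ends, a basic open neighbourhood of an end $\alpha$ being, for finite $S$, the union of $C(S,\alpha)$, the ends whose rays have tails in $C(S,\alpha)$, and the inner points of edges between $S$ and $C(S,\alpha)$. A Hamiltonian circle of $H$ is the image of a homeomorphic embedding of $S^1$ into $|H|$ containing every vertex of $H$. A subgraph $F$ of $G$ is faithful to $G$ if (i) every end of $G$ contains a ray of $F$, and (ii) any two rays of $F$ are equivalent in $F$ if and only if they are equivalent in $G$. *)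

theory Defs
  imports "HOL-Analysis.Analysis"
begin

definition graph :: "'v set \<Rightarrow> 'v set set \<Rightarrow> bool" where
  "graph V E \<longleftrightarrow> (\<forall>e\<in>E. card e = 2 \<and> e \<subseteq> V)"

definition locally_finite :: "'v set \<Rightarrow> 'v set set \<Rightarrow> bool" where
  "locally_finite V E \<longleftrightarrow> (\<forall>v\<in>V. finite {e\<in>E. v \<in> e})"

definition is_ray :: "'v set \<Rightarrow> 'v set set \<Rightarrow> (nat \<Rightarrow> 'v) \<Rightarrow> bool" where
  "is_ray V E r \<longleftrightarrow> inj r \<and> (\<forall>n. r n \<in> V) \<and> (\<forall>n. {r n, r (Suc n)} \<in> E)"

definition comp :: "'v set \<Rightarrow> 'v set set \<Rightarrow> 'v set \<Rightarrow> 'v \<Rightarrow> 'v set" where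
  "comp V E S v = {w. (\<lambda>x y. x \<in> V - S \<and> y \<in> V - S \<and> {x, y} \<in> E)\<^sup>*\<^sup>* v w}"

definition components :: "'v set \<Rightarrow> 'v set set \<Rightarrow> 'v set \<Rightarrow> 'v set set" where
  "components V E S = {comp V E S v | v. v \<in> V - S}"

definition has_tail_in :: "(nat \<Rightarrow> 'v) \<Rightarrow> 'v set \<Rightarrow> bool" where
  "has_tail_in r C \<longleftrightarrow> (\<exists>n. \<forall>m\<ge>n. r m \<in> C)"

definition ray_equiv :: "'v set \<Rightarrow> 'v set set \<Rightarrow> (nat \<Rightarrow> 'v) \<Rightarrow> (nat \<Rightarrow> 'v) \<Rightarrow> bool" where
  "ray_equiv V E r1 r2 \<longleftrightarrow>
     (\<forall>S. finite S \<longrightarrow> S \<subseteq> V \<longrightarrow> (\<exists>C\<in>components V E S. has_tail_in r1 C \<and> has_tail_in r2 C))"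

definition ends :: "'v set \<Rightarrow> 'v set set \<Rightarrow> (nat \<Rightarrow> 'v) set set" where
  "ends V E = {{r'. is_ray V E r' \<and> ray_equiv V E r r'} | r. is_ray V E r}"

text \<open>Points of the Freudenthal compactification |H|: points of the 1-complex are given
  by barycentric coordinates (a vertex v is the indicator of v, an inner point of an
  edge e is a function supported on e with positive values summing to 1); ends are
  equivalence classes of rays.\<close>
datatype 'v fpoint = Pt "'v \<Rightarrow> real" | End "(nat \<Rightarrow> 'v) set"

definition vtx :: "'v \<Rightarrow> 'v fpoint" where
  "vtx v = Pt (\<lambda>x. if x = v then 1 else 0)"

definition inner_pts :: "'v set \<Rightarrow> 'v fpoint set" where
  "inner_pts e = {Pt f | f. (\<forall>x. x \<notin> e \<longrightarrow> f x = 0) \<and> (\<forall>x\<in>e. 0 < f x) \<and> sum f e = 1}"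

definition edge_intervals :: "'v set \<Rightarrow> 'v set set \<Rightarrow> 'v fpoint set set" where
  "edge_intervals V E =
     {{Pt f | f. Pt f \<in> inner_pts e \<and> a < f u \<and> f u < b} | e u a b. e \<in> E \<and> u \<in> e}"

definition vertex_stars :: "'v set \<Rightarrow> 'v set set \<Rightarrow> 'v fpoint set set" where
  "vertex_stars V E =
     {insert (vtx v) {Pt f | f. \<exists>e\<in>E. v \<in> e \<and> Pt f \<in> inner_pts e \<and> 1 - \<epsilon> < f v}
       | v \<epsilon>. v \<in> V \<and> 0 < \<epsilon>}"

text \<open>Basic open neighbourhoods of ends: for finite S and a component C = C(S,\<alpha>) of H - S
  in which some end \<alpha> lives, the union of C (its vertices and inner points of its edges),
  the ends living in C, and the inner points of S--C edges.\<close>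
definition end_nbhds :: "'v set \<Rightarrow> 'v set set \<Rightarrow> 'v fpoint set set" where
  "end_nbhds V E =
     {{vtx v | v. v \<in> C}
      \<union> (\<Union>{inner_pts e | e. e \<in> E \<and> e \<inter> C \<noteq> {}})
      \<union> {End \<beta> | \<beta>. \<beta> \<in> ends V E \<and> (\<forall>r\<in>\<beta>. has_tail_in r C)}
      | S C. finite S \<and> S \<subseteq> V \<and> C \<in> components V E S \<and>
             (\<exists>\<alpha>\<in>ends V E. \<forall>r\<in>\<alpha>. has_tail_in r C)}"

definition freudenthal :: "'v set \<Rightarrow> 'v set set \<Rightarrow> 'v fpoint topology" where
  "freudenthal V E = topology_generated_by (edge_intervals V E \<union> vertex_stars V E \<union> end_nbhds V E)"

definition hamiltonian_circle :: "'v set \<Rightarrow> 'v set set \<Rightarrow> 'v fpoint set \<Rightarrow> bool" where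
  "hamiltonian_circle V E Z \<longleftrightarrow>
     (\<exists>\<phi>. embedding_map (top_of_set (sphere (0::complex) 1)) (freudenthal V E) \<phi>
          \<and> \<phi> ` sphere 0 1 = Z) \<and> (\<forall>v\<in>V. vtx v \<in> Z)"

definition faithful :: "'v set \<Rightarrow> 'v set set \<Rightarrow> 'v set \<Rightarrow> 'v set set \<Rightarrow> bool" where
  "faithful VF EF VG EG \<longleftrightarrow>
     (\<forall>\<alpha>\<in>ends VG EG. \<exists>r\<in>\<alpha>. is_ray VF EF r) \<and>
     (\<forall>r1 r2. is_ray VF EF r1 \<longrightarrow> is_ray VF EF r2 \<longrightarrow>
        (ray_equiv VF EF r1 r2 \<longleftrightarrow> ray_equiv VG EG r1 r2))"

end

theory Submission
  imports Defs
begin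


abbreviation R :: "'v set \<Rightarrow> 'v set set \<Rightarrow> 'v set \<Rightarrow> 'v \<Rightarrow> 'v \<Rightarrow> bool" where
  "R V E S \<equiv> (\<lambda>x y. x \<in> V - S \<and> y \<in> V - S \<and> {x, y} \<in> E)"

lemma R_sym: "(R V E S)\<^sup>*\<^sup>* v w \<Longrightarrow> (R V E S)\<^sup>*\<^sup>* w v"
proof (induction rule: rtranclp.induct)
  case (rtrancl_refl a) then show ?case by simp
next
  case (rtrancl_into_rtrancl a b c)
  then have "R V E S c b" by (simp add: insert_commute)
  then show ?case using rtrancl_into_rtrancl(3) by (rule converse_rtranclp_into_rtranclp)
qed

lemma comp_refl: "v \<in> comp V E S v"
  by (simp add: comp_def)

lemma comp_sub: "v \<in> V - S \<Longrightarrow> comp V E S v \<subseteq> V - S"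
proof
  fix w assume "v \<in> V - S" "w \<in> comp V E S v"
  then have "(R V E S)\<^sup>*\<^sup>* v w" by (simp add: comp_def)
  then show "w \<in> V - S" using \<open>v \<in> V - S\<close>
    by (induction rule: rtranclp.induct) auto
qed

lemma comp_eq: "w \<in> comp V E S v \<Longrightarrow> comp V E S w = comp V E S v"
proof -
  assume "w \<in> comp V E S v"
  then have 1: "(R V E S)\<^sup>*\<^sup>* v w" by (simp add: comp_def)
  then have 2: "(R V E S)\<^sup>*\<^sup>* w v" by (rule R_sym)
  show ?thesis unfolding comp_def
    using rtranclp_trans[OF 1] rtranclp_trans[OF 2] by blast
qed

lemma components_D: "C \<in> components V E S \<Longrightarrow> \<exists>v. C = comp V E S v \<and> v \<in> V - S"
  by (simp add: components_def)

lemma components_sub: "C \<in> components V E S \<Longrightarrow> C \<subseteq> V - S"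
proof -
  assume "C \<in> components V E S"
  then obtain v where "C = comp V E S v" "v \<in> V - S" using components_D by blast
  then show ?thesis using comp_sub[of v V S E] by simp
qed

lemma components_eq: "C \<in> components V E S \<Longrightarrow> x \<in> C \<Longrightarrow> C = comp V E S x"
proof -
  assume "C \<in> components V E S" "x \<in> C"
  then obtain v where "C = comp V E S v" "v \<in> V - S" using components_D by blast
  then show ?thesis using comp_eq[of x V E S v] \<open>x \<in> C\<close> by simp
qed

lemma components_disj: "C1 \<in> components V E S \<Longrightarrow> C2 \<in> components V E S \<Longrightarrow> x \<in> C1 \<Longrightarrow> x \<in> C2 \<Longrightarrow> C1 = C2"
proof -
  assume a: "C1 \<in> components V E S" "C2 \<in> components V E S" "x \<in> C1" "x \<in> C2"
  have "C1 = comp V E S x" by (rule components_eq[OF a(1,3)])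
  moreover have "C2 = comp V E S x" by (rule components_eq[OF a(2,4)])
  ultimately show ?thesis by simp
qed

lemma components_edge: "C \<in> components V E S \<Longrightarrow> x \<in> C \<Longrightarrow> y \<in> V - S \<Longrightarrow> {x, y} \<in> E \<Longrightarrow> y \<in> C"
proof -
  assume a: "C \<in> components V E S" "x \<in> C" "y \<in> V - S" "{x, y} \<in> E"
  have C: "C = comp V E S x" by (rule components_eq[OF a(1,2)])
  have "x \<in> V - S" using a(2) components_sub[OF a(1)] by blast
  then have "R V E S x y" using a(3,4) by simp
  then have "(R V E S)\<^sup>*\<^sup>* x y" by (rule r_into_rtranclp)
  then show "y \<in> C" unfolding C comp_def by simp
qed

lemma comp_mono:
  assumes "EF \<subseteq> EG" shows "comp V EF S v \<subseteq> comp V EG S v"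
proof
  fix w assume "w \<in> comp V EF S v"
  then have 1: "(R V EF S)\<^sup>*\<^sup>* v w" by (simp add: comp_def)
  have "R V EF S \<le> R V EG S" using assms by (intro predicate2I) blast
  then have "(R V EF S)\<^sup>*\<^sup>* \<le> (R V EG S)\<^sup>*\<^sup>*" by (rule rtranclp_mono)
  then have "(R V EG S)\<^sup>*\<^sup>* v w" using 1 by (rule predicate2D)
  then show "w \<in> comp V EG S v" by (simp add: comp_def)
qed

lemma ray_tail:
  assumes "is_ray V E r" "finite S"
  shows "\<exists>C\<in>components V E S. has_tail_in r C"
proof -
  have inj: "inj r" using assms(1) by (simp add: is_ray_def)
  have fin: "finite (r -` S)" by (rule finite_vimageI[OF assms(2) inj])
  have "\<exists>N. \<forall>n\<in>r -` S. n < N" using fin finite_nat_set_iff_bounded by blast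
  then obtain N where N: "\<And>n. n \<in> r -` S \<Longrightarrow> n < N" by blast
  have out: "m \<ge> N \<Longrightarrow> r m \<in> V - S" for m using N[of m] assms(1) by (auto simp: is_ray_def)
  have step: "(R V E S)\<^sup>*\<^sup>* (r N) (r (N + k))" for k
  proof (induction k)
    case 0 then show ?case by simp
  next
    case (Suc k)
    have "R V E S (r (N + k)) (r (N + Suc k))" using out[of "N+k"] out[of "N + Suc k"] assms(1)
      by (auto simp: is_ray_def)
    with Suc.IH show ?case by (rule rtranclp.rtrancl_into_rtrancl)
  qed
  have "\<forall>m\<ge>N. r m \<in> comp V E S (r N)"
  proof (intro allI impI)
    fix m assume "N \<le> m"
    then obtain k where "m = N + k" using le_Suc_ex by blast
    then show "r m \<in> comp V E S (r N)" using step[of k] by (simp add: comp_def)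
  qed
  moreover have "comp V E S (r N) \<in> components V E S" unfolding components_def using out[of N] by blast
  ultimately show ?thesis unfolding has_tail_in_def by blast
qed

lemma tail_unique:
  assumes "C1 \<in> components V E S" "C2 \<in> components V E S" "has_tail_in r C1" "has_tail_in r C2"
  shows "C1 = C2"
proof -
  obtain n1 n2 where "\<forall>m\<ge>n1. r m \<in> C1" "\<forall>m\<ge>n2. r m \<in> C2" using assms(3,4) by (auto simp: has_tail_in_def)
  then have "r (max n1 n2) \<in> C1" "r (max n1 n2) \<in> C2" by auto
  then show ?thesis using components_disj[OF assms(1,2)] by blast
qed

lemma ray_equiv_refl: "is_ray V E r \<Longrightarrow> ray_equiv V E r r"
  unfolding ray_equiv_def using ray_tail by blast

lemma ray_equiv_sym: "ray_equiv V E r1 r2 \<Longrightarrow> ray_equiv V E r2 r1"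
  unfolding ray_equiv_def by blast

lemma ray_equiv_trans: "ray_equiv V E r1 r2 \<Longrightarrow> ray_equiv V E r2 r3 \<Longrightarrow> ray_equiv V E r1 r3"
  unfolding ray_equiv_def
proof (intro allI impI)
  fix S :: "'a set" assume a: "\<forall>S. finite S \<longrightarrow> S \<subseteq> V \<longrightarrow> (\<exists>C\<in>components V E S. has_tail_in r1 C \<and> has_tail_in r2 C)"
    "\<forall>S. finite S \<longrightarrow> S \<subseteq> V \<longrightarrow> (\<exists>C\<in>components V E S. has_tail_in r2 C \<and> has_tail_in r3 C)"
    "finite S" "S \<subseteq> V"
  then obtain C C' where "C\<in>components V E S" "has_tail_in r1 C" "has_tail_in r2 C"
    "C'\<in>components V E S" "has_tail_in r2 C'" "has_tail_in r3 C'" by blast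
  moreover have "C = C'" using tail_unique[of C V E S C' r2] calculation by blast
  ultimately show "\<exists>C\<in>components V E S. has_tail_in r1 C \<and> has_tail_in r3 C"
    by blast
qed

definition cls :: "'v set \<Rightarrow> 'v set set \<Rightarrow> (nat \<Rightarrow> 'v) \<Rightarrow> (nat \<Rightarrow> 'v) set" where
  "cls V E r = {r'. is_ray V E r' \<and> ray_equiv V E r r'}"

lemma ends_cls: "ends V E = {cls V E r | r. is_ray V E r}"
  unfolding ends_def cls_def by simp

lemma cls_mem: "is_ray V E r \<Longrightarrow> r \<in> cls V E r"
  unfolding cls_def using ray_equiv_refl by blast

lemma cls_eq: "is_ray V E r \<Longrightarrow> r' \<in> cls V E r \<Longrightarrow> cls V E r' = cls V E r"
proof -
  assume "r' \<in> cls V E r"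
  then have a: "ray_equiv V E r r'" "ray_equiv V E r' r" unfolding cls_def using ray_equiv_sym by auto
  show ?thesis unfolding cls_def using ray_equiv_trans[OF a(1)] ray_equiv_trans[OF a(2)] by blast
qed

lemma cls_eq_iff: "is_ray V E r \<Longrightarrow> is_ray V E r' \<Longrightarrow> cls V E r = cls V E r' \<longleftrightarrow> ray_equiv V E r r'"
proof
  assume "is_ray V E r" "is_ray V E r'" "cls V E r = cls V E r'"
  then have "r' \<in> cls V E r" using cls_mem by metis
  then show "ray_equiv V E r r'" unfolding cls_def by simp
next
  assume "is_ray V E r" "is_ray V E r'" "ray_equiv V E r r'"
  then have "r' \<in> cls V E r" unfolding cls_def by simp
  then show "cls V E r = cls V E r'" using cls_eq \<open>is_ray V E r\<close> by metis
qed

lemma end_comp: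
  assumes "\<alpha> \<in> ends V E" "finite S" "S \<subseteq> V"
  shows "\<exists>C\<in>components V E S. \<forall>r\<in>\<alpha>. has_tail_in r C"
proof -
  obtain r where r: "is_ray V E r" "\<alpha> = cls V E r" using assms(1) ends_cls by blast
  then obtain C where C: "C\<in>components V E S" "has_tail_in r C" using ray_tail assms(2) by blast
  have "\<forall>r'\<in>\<alpha>. has_tail_in r' C"
  proof
    fix r' assume "r' \<in> \<alpha>"
    then have "ray_equiv V E r r'" using r cls_def by blast
    then obtain C' where "C'\<in>components V E S" "has_tail_in r C'" "has_tail_in r' C'"
      using assms(2,3) unfolding ray_equiv_def by blast
    moreover have "C' = C" using tail_unique[of C' V E S C r] calculation C by blast
    ultimately show "has_tail_in r' C" by blast
  qed
  then show ?thesis using C by blast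
qed


definition star :: "'v set set \<Rightarrow> 'v \<Rightarrow> real \<Rightarrow> 'v fpoint set" where
  "star E v \<epsilon> = insert (vtx v) {Pt f | f. \<exists>e\<in>E. v \<in> e \<and> Pt f \<in> inner_pts e \<and> 1 - \<epsilon> < f v}"

definition ival :: "'v set \<Rightarrow> 'v \<Rightarrow> real \<Rightarrow> real \<Rightarrow> 'v fpoint set" where
  "ival e u a b = {Pt f | f. Pt f \<in> inner_pts e \<and> a < f u \<and> f u < b}"

definition enb :: "'v set \<Rightarrow> 'v set set \<Rightarrow> 'v set \<Rightarrow> 'v fpoint set" where
  "enb V E C = {vtx v | v. v \<in> C}
      \<union> (\<Union>{inner_pts e | e. e \<in> E \<and> e \<inter> C \<noteq> {}})
      \<union> {End \<beta> | \<beta>. \<beta> \<in> ends V E \<and> (\<forall>r\<in>\<beta>. has_tail_in r C)}"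

lemma open_star:
  assumes "v \<in> V" "0 < \<epsilon>" shows "openin (freudenthal V E) (star E v \<epsilon>)"
proof -
  have "star E v \<epsilon> \<in> vertex_stars V E" unfolding vertex_stars_def star_def using assms by blast
  then show ?thesis unfolding freudenthal_def by (intro topology_generated_by_Basis) blast
qed

lemma open_ival:
  assumes "e \<in> E" "u \<in> e" shows "openin (freudenthal V E) (ival e u a b)"
proof -
  have "ival e u a b \<in> edge_intervals V E" unfolding edge_intervals_def ival_def using assms by blast
  then show ?thesis unfolding freudenthal_def by (intro topology_generated_by_Basis) blast
qed

lemma open_enb:
  assumes "finite S" "S \<subseteq> V" "C \<in> components V E S" "\<alpha> \<in> ends V E" "\<forall>r\<in>\<alpha>. has_tail_in r C"
  shows "openin (freudenthal V E) (enb V E C)"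
proof -
  have "enb V E C \<in> end_nbhds V E" unfolding end_nbhds_def enb_def using assms by blast
  then show ?thesis unfolding freudenthal_def by (intro topology_generated_by_Basis) blast
qed

lemma topspace_fr: "topspace (freudenthal V E) = \<Union>(edge_intervals V E \<union> vertex_stars V E \<union> end_nbhds V E)"
  unfolding freudenthal_def by (rule topology_generated_by_topspace)

lemma sub_topspace: "openin X U \<Longrightarrow> x \<in> U \<Longrightarrow> x \<in> topspace X"
  using openin_subset by blast

lemma vtx_inj: "vtx v = vtx w \<Longrightarrow> v = w"
proof -
  assume "vtx v = vtx w"
  then have "(\<lambda>x. if x = v then 1 else 0) = (\<lambda>x. if x = w then (1::real) else 0)" by (simp add: vtx_def)
  then have "(if v = v then 1 else 0) = (if v = w then (1::real) else 0)" by metis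
  then show "v = w" by (cases "v = w") simp_all
qed

lemma inner_D: "Pt f \<in> inner_pts e \<Longrightarrow> (\<forall>x. x \<notin> e \<longrightarrow> f x = 0) \<and> (\<forall>x\<in>e. 0 < f x) \<and> sum f e = 1"
  unfolding inner_pts_def by simp

lemma inner_Pt: "p \<in> inner_pts e \<Longrightarrow> \<exists>f. p = Pt f"
  unfolding inner_pts_def by blast

lemma End_not_inner: "End \<beta> \<notin> inner_pts e"
  using inner_Pt by blast

lemma card2: "card e = 2 \<Longrightarrow> u \<in> e \<Longrightarrow> \<exists>w. w \<noteq> u \<and> e = {u, w}"
proof -
  assume a: "card e = 2" "u \<in> e"
  then obtain x y where xy: "x \<noteq> y" "e = {x, y}" by (meson card_2_iff)
  show ?thesis
  proof (cases "u = x")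
    case True then show ?thesis using xy by (intro exI[of _ y]) simp
  next
    case False then have "u = y" using a(2) xy by blast
    then show ?thesis using xy by (intro exI[of _ x]) auto
  qed
qed

lemma inner_sum2:
  assumes "card e = 2" "u \<in> e" "w \<in> e" "u \<noteq> w" "Pt f \<in> inner_pts e"
  shows "f u + f w = 1"
proof -
  obtain w' where w': "w' \<noteq> u" "e = {u, w'}" using card2[OF assms(1,2)] by blast
  then have "w = w'" using assms(3,4) by blast
  then have "e = {u, w}" using w' by simp
  then show ?thesis using inner_D[OF assms(5)] assms(4) by simp
qed

lemma inner_lt1:
  assumes "card e = 2" "u \<in> e" "Pt f \<in> inner_pts e"
  shows "f u < 1"
proof -
  obtain w where w: "w \<noteq> u" "e = {u, w}" using card2[OF assms(1,2)] by blast
  then have "f u + f w = 1" using inner_sum2[of e u w f] assms by auto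
  moreover have "0 < f w" using inner_D[OF assms(3)] w by auto
  ultimately show ?thesis by simp
qed

lemma vtx_not_inner: "card e = 2 \<Longrightarrow> vtx v \<notin> inner_pts e"
proof
  assume a: "card e = 2" "vtx v \<in> inner_pts e"
  obtain x y where xy: "x \<noteq> y" "e = {x, y}" using a(1) by (meson card_2_iff)
  have "Pt (\<lambda>x. if x = v then 1 else 0) \<in> inner_pts e" using a(2) by (simp add: vtx_def)
  then have all: "\<forall>z\<in>e. 0 < (if z = v then 1 else (0::real))" using inner_D by blast
  have "0 < (if x = v then 1 else (0::real))" using all xy(2) by blast
  then have "x = v" by (cases "x = v") simp_all
  have "0 < (if y = v then 1 else (0::real))" using all xy(2) by blast
  then have "y = v" by (cases "y = v") simp_all
  show False using xy(1) \<open>x = v\<close> \<open>y = v\<close> by simp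
qed

lemma inner_disj: "p \<in> inner_pts e \<Longrightarrow> p \<in> inner_pts e' \<Longrightarrow> e = e'"
proof -
  assume a: "p \<in> inner_pts e" "p \<in> inner_pts e'"
  obtain f where p: "p = Pt f" using a(1) inner_Pt by blast
  have 1: "(\<forall>x. x \<notin> e \<longrightarrow> f x = 0) \<and> (\<forall>x\<in>e. 0 < f x)" using inner_D a(1) p by blast
  have 2: "(\<forall>x. x \<notin> e' \<longrightarrow> f x = 0) \<and> (\<forall>x\<in>e'. 0 < f x)" using inner_D a(2) p by blast
  show "e = e'"
  proof
    show "e \<subseteq> e'"
    proof
      fix x assume "x \<in> e" then have "0 < f x" using 1 by blast
      then show "x \<in> e'" using 2 by (metis less_irrefl)
    qed
    show "e' \<subseteq> e"
    proof
      fix x assume "x \<in> e'" then have "0 < f x" using 2 by blast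
      then show "x \<in> e" using 1 by (metis less_irrefl)
    qed
  qed
qed

lemma inner_eq_ival:
  assumes "card e = 2" "u \<in> e" shows "inner_pts e = ival e u 0 2"
proof
  show "ival e u 0 2 \<subseteq> inner_pts e" unfolding ival_def by blast
  show "inner_pts e \<subseteq> ival e u 0 2"
  proof
    fix p assume p: "p \<in> inner_pts e"
    then obtain f where f: "p = Pt f" using inner_Pt by blast
    have "0 < f u" using inner_D p f assms(2) by blast
    moreover have "f u < 1" using inner_lt1[OF assms] p f by blast
    ultimately show "p \<in> ival e u 0 2" unfolding ival_def using p f by auto
  qed
qed

lemma open_inner:
  assumes "e \<in> E" "card e = 2" shows "openin (freudenthal V E) (inner_pts e)"
proof -
  obtain x y where xy: "x \<noteq> y" "e = {x, y}" using assms(2) by (meson card_2_iff)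
  have x: "x \<in> e" using xy by simp
  have "inner_pts e = ival e x 0 2" by (rule inner_eq_ival[OF assms(2) x])
  then show ?thesis using open_ival[OF assms(1) x, of V 0 2] by simp
qed

lemma ends_nonempty: "\<beta> \<in> ends V E \<Longrightarrow> \<exists>r. r \<in> \<beta> \<and> is_ray V E r"
proof -
  assume "\<beta> \<in> ends V E"
  then obtain r where r: "is_ray V E r" "\<beta> = cls V E r" unfolding ends_cls by blast
  then have "r \<in> \<beta>" using cls_mem[OF r(1)] by simp
  then show ?thesis using r by blast
qed

lemma ends_rays: "\<beta> \<in> ends V E \<Longrightarrow> r \<in> \<beta> \<Longrightarrow> is_ray V E r"
  unfolding ends_cls cls_def by blast

lemma ei_D: "U \<in> edge_intervals V E \<Longrightarrow> x \<in> U \<Longrightarrow> \<exists>e\<in>E. x \<in> inner_pts e"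
  unfolding edge_intervals_def by blast

lemma vs_D: "U \<in> vertex_stars V E \<Longrightarrow> x \<in> U \<Longrightarrow> (\<exists>v\<in>V. x = vtx v) \<or> (\<exists>e\<in>E. x \<in> inner_pts e)"
  unfolding vertex_stars_def by blast

lemma en_D: "U \<in> end_nbhds V E \<Longrightarrow> x \<in> U \<Longrightarrow>
   \<exists>S C. finite S \<and> S \<subseteq> V \<and> C \<in> components V E S \<and> x \<in> enb V E C"
proof -
  assume a: "U \<in> end_nbhds V E" "x \<in> U"
  have "\<exists>S C. U = enb V E C \<and> (finite S \<and> S \<subseteq> V \<and> C \<in> components V E S \<and>
             (\<exists>\<alpha>\<in>ends V E. \<forall>r\<in>\<alpha>. has_tail_in r C))"
    using a(1) unfolding end_nbhds_def enb_def by (simp only: mem_Collect_eq)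
  then obtain S C where "U = enb V E C" "finite S" "S \<subseteq> V" "C \<in> components V E S" by blast
  then show ?thesis using a(2) by blast
qed

lemma enb_D: "x \<in> enb V E C \<Longrightarrow> (\<exists>v\<in>C. x = vtx v) \<or> (\<exists>e\<in>E. e \<inter> C \<noteq> {} \<and> x \<in> inner_pts e)
   \<or> (\<exists>\<beta>. x = End \<beta> \<and> \<beta> \<in> ends V E \<and> (\<forall>r\<in>\<beta>. has_tail_in r C))"
  unfolding enb_def by blast

lemma classify:
  assumes "x \<in> topspace (freudenthal V E)"
  shows "(\<exists>v\<in>V. x = vtx v) \<or> (\<exists>e\<in>E. x \<in> inner_pts e) \<or> (\<exists>\<beta>\<in>ends V E. x = End \<beta>)"
proof -
  have "x \<in> \<Union>(edge_intervals V E \<union> vertex_stars V E \<union> end_nbhds V E)"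
    using assms topspace_fr[of V E] by simp
  then consider (a) U where "U \<in> edge_intervals V E" "x \<in> U"
    | (b) U where "U \<in> vertex_stars V E" "x \<in> U" | (c) U where "U \<in> end_nbhds V E" "x \<in> U"
    by blast
  then show ?thesis
  proof cases
    case a then show ?thesis using ei_D[OF a] by blast
  next
    case b then show ?thesis using vs_D[OF b] by blast
  next
    case c
    then obtain S C where SC: "finite S" "S \<subseteq> V" "C \<in> components V E S" "x \<in> enb V E C"
      using en_D[OF c] by blast
    have CV: "C \<subseteq> V" using components_sub[OF SC(3)] by blast
    from enb_D[OF SC(4)] show ?thesis
    proof (elim disjE)
      assume "\<exists>v\<in>C. x = vtx v" then show ?thesis using CV by blast
    next
      assume "\<exists>e\<in>E. e \<inter> C \<noteq> {} \<and> x \<in> inner_pts e" then show ?thesis by blast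
    next
      assume "\<exists>\<beta>. x = End \<beta> \<and> \<beta> \<in> ends V E \<and> (\<forall>r\<in>\<beta>. has_tail_in r C)"
      then show ?thesis by blast
    qed
  qed
qed

lemma vtx_top: "v \<in> V \<Longrightarrow> vtx v \<in> topspace (freudenthal V E)"
proof -
  assume v: "v \<in> V"
  have "vtx v \<in> star E v 1" by (simp add: star_def)
  then show ?thesis using sub_topspace[OF open_star[OF v, of 1 E]] by simp
qed

lemma inner_top: "e \<in> E \<Longrightarrow> card e = 2 \<Longrightarrow> p \<in> inner_pts e \<Longrightarrow> p \<in> topspace (freudenthal V E)"
proof -
  assume a: "e \<in> E" "card e = 2" "p \<in> inner_pts e"
  show ?thesis using sub_topspace[OF open_inner[OF a(1,2), of V] a(3)] .
qed

lemma end_top: "\<beta> \<in> ends V E \<Longrightarrow> End \<beta> \<in> topspace (freudenthal V E)"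
proof -
  assume b: "\<beta> \<in> ends V E"
  obtain C where C: "C\<in>components V E {}" "\<forall>r\<in>\<beta>. has_tail_in r C" using end_comp[OF b] by blast
  have "openin (freudenthal V E) (enb V E C)" using open_enb[of "{}" V C E \<beta>] C b by blast
  moreover have "End \<beta> \<in> enb V E C" unfolding enb_def using b C by blast
  ultimately show ?thesis by (rule sub_topspace)
qed


definition gend :: "'v set \<Rightarrow> 'v set set \<Rightarrow> (nat \<Rightarrow> 'v) set \<Rightarrow> (nat \<Rightarrow> 'v) set" where
  "gend V E \<beta> = cls V E (SOME r. r \<in> \<beta>)"

definition psi :: "'v set \<Rightarrow> 'v set set \<Rightarrow> 'v fpoint \<Rightarrow> 'v fpoint" where
  "psi V E x = (case x of Pt f \<Rightarrow> Pt f | End \<beta> \<Rightarrow> End (gend V E \<beta>))"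

lemma psi_Pt: "psi V E (Pt f) = Pt f"
  by (simp add: psi_def)

lemma psi_End: "psi V E (End \<beta>) = End (gend V E \<beta>)"
  by (simp add: psi_def)

lemma psi_vtx: "psi V E (vtx v) = vtx v"
  by (simp add: psi_def vtx_def)

lemma psi_inner: "p \<in> inner_pts e \<Longrightarrow> psi V E p = p"
proof -
  assume "p \<in> inner_pts e"
  then obtain f where "p = Pt f" using inner_Pt by blast
  then show ?thesis by (simp add: psi_Pt)
qed

lemma psi_Pt_pre: "psi V E x = Pt f \<Longrightarrow> x = Pt f"
  by (cases x) (simp_all add: psi_def)

lemma vtx_Pt: "\<exists>f. vtx v = Pt f"
  by (simp add: vtx_def)

lemma vtx_not_End: "vtx v \<noteq> End \<beta>"
  by (simp add: vtx_def)

lemma is_ray_mono: "EF \<subseteq> EG \<Longrightarrow> is_ray V EF r \<Longrightarrow> is_ray V EG r"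
  unfolding is_ray_def by auto

lemma tail_mono: "has_tail_in r C \<Longrightarrow> C \<subseteq> D \<Longrightarrow> has_tail_in r D"
  unfolding has_tail_in_def by blast

lemma comp_in_comp:
  assumes "EF \<subseteq> EG" "C \<in> components V EF S"
  shows "\<exists>D\<in>components V EG S. C \<subseteq> D"
proof -
  obtain v where v: "C = comp V EF S v" "v \<in> V - S" using components_D[OF assms(2)] by blast
  have "comp V EG S v \<in> components V EG S" unfolding components_def using v(2) by blast
  moreover have "C \<subseteq> comp V EG S v" using v(1) comp_mono[OF assms(1)] by simp
  ultimately show ?thesis by blast
qed

lemma ray_equiv_mono:
  assumes "EF \<subseteq> EG" "ray_equiv V EF r1 r2"
  shows "ray_equiv V EG r1 r2"
  unfolding ray_equiv_def
proof (intro allI impI)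
  fix S assume S: "finite S" "S \<subseteq> V"
  then obtain C where C: "C \<in> components V EF S" "has_tail_in r1 C" "has_tail_in r2 C"
    using assms(2) unfolding ray_equiv_def by blast
  obtain D where D: "D\<in>components V EG S" "C \<subseteq> D" using comp_in_comp[OF assms(1) C(1)] by blast
  show "\<exists>C\<in>components V EG S. has_tail_in r1 C \<and> has_tail_in r2 C"
    using D tail_mono[OF C(2) D(2)] tail_mono[OF C(3) D(2)] by blast
qed

lemma end_cls_any: "\<beta> \<in> ends V E \<Longrightarrow> r \<in> \<beta> \<Longrightarrow> cls V E r = \<beta>"
proof -
  assume a: "\<beta> \<in> ends V E" "r \<in> \<beta>"
  then obtain r0 where r0: "is_ray V E r0" "\<beta> = cls V E r0" unfolding ends_cls by blast
  show ?thesis using cls_eq[OF r0(1)] a(2) r0(2) by simp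
qed

lemma some_in: "\<beta> \<in> ends V E \<Longrightarrow> (SOME r. r \<in> \<beta>) \<in> \<beta>"
proof -
  assume "\<beta> \<in> ends V E"
  then obtain r where "r \<in> \<beta>" using ends_nonempty by blast
  then show ?thesis by (rule someI[where P="\<lambda>r. r \<in> \<beta>"])
qed

lemma gend_ends:
  assumes "EF \<subseteq> EG" "\<beta> \<in> ends V EF"
  shows "gend V EG \<beta> \<in> ends V EG"
proof -
  have "(SOME r. r \<in> \<beta>) \<in> \<beta>" by (rule some_in[OF assms(2)])
  then have "is_ray V EF (SOME r. r \<in> \<beta>)" by (rule ends_rays[OF assms(2)])
  then have "is_ray V EG (SOME r. r \<in> \<beta>)" by (rule is_ray_mono[OF assms(1)])
  then show ?thesis unfolding gend_def ends_cls by blast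
qed

lemma gend_mem:
  assumes "EF \<subseteq> EG" "\<beta> \<in> ends V EF" "r \<in> \<beta>"
  shows "r \<in> gend V EG \<beta>"
proof -
  define r0 where "r0 = (SOME r. r \<in> \<beta>)"
  have r0: "r0 \<in> \<beta>" unfolding r0_def by (rule some_in[OF assms(2)])
  have "cls V EF r0 = \<beta>" by (rule end_cls_any[OF assms(2) r0])
  then have "r \<in> cls V EF r0" using assms(3) by simp
  then have "is_ray V EF r" "ray_equiv V EF r0 r" unfolding cls_def by simp_all
  then have "is_ray V EG r" "ray_equiv V EG r0 r"
    using is_ray_mono[OF assms(1)] ray_equiv_mono[OF assms(1)] by blast+
  then show ?thesis unfolding gend_def r0_def[symmetric] cls_def by simp
qed

lemma cls_tail:
  assumes "is_ray V E r" "has_tail_in r C" "C \<in> components V E S" "finite S" "S \<subseteq> V" "r' \<in> cls V E r"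
  shows "has_tail_in r' C"
proof -
  have "ray_equiv V E r r'" using assms(6) unfolding cls_def by simp
  then obtain C' where C': "C' \<in> components V E S" "has_tail_in r C'" "has_tail_in r' C'"
    using assms(4,5) unfolding ray_equiv_def by blast
  have "C' = C" by (rule tail_unique[OF C'(1) assms(3) C'(2) assms(2)])
  then show ?thesis using C'(3) by simp
qed

lemma top_End: "End \<beta> \<in> topspace (freudenthal V E) \<Longrightarrow> \<beta> \<in> ends V E"
proof -
  assume a: "End \<beta> \<in> topspace (freudenthal V E)"
  have "\<not> (\<exists>e. End \<beta> \<in> inner_pts e)" using End_not_inner by blast
  moreover have "\<not> (\<exists>v. End \<beta> = vtx v)" using vtx_not_End by metis
  ultimately show ?thesis using classify[OF a] by blast
qed

lemma psi_inj:
  assumes "EF \<subseteq> EG" "faithful V EF V EG"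
  shows "inj_on (psi V EG) (topspace (freudenthal V EF))"
proof
  fix x y assume x: "x \<in> topspace (freudenthal V EF)" and y: "y \<in> topspace (freudenthal V EF)"
    and eq: "psi V EG x = psi V EG y"
  show "x = y"
  proof (cases x)
    case (Pt f)
    then have "psi V EG y = Pt f" using eq by (simp add: psi_Pt)
    then show ?thesis using Pt psi_Pt_pre by metis
  next
    case (End \<beta>1)
    note xE = End
    show ?thesis
    proof (cases y)
      case (Pt g)
      then show ?thesis using eq xE by (simp add: psi_def)
    next
      case (End \<beta>2)
      note End2 = End
      note End = xE
      have b1: "\<beta>1 \<in> ends V EF" using top_End x End by simp
      have b2: "\<beta>2 \<in> ends V EF" using top_End y End2 by simp
      define r1 where "r1 = (SOME r. r \<in> \<beta>1)"
      define r2 where "r2 = (SOME r. r \<in> \<beta>2)"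
      have r1: "r1 \<in> \<beta>1" unfolding r1_def by (rule some_in[OF b1])
      have r2: "r2 \<in> \<beta>2" unfolding r2_def by (rule some_in[OF b2])
      have f1: "is_ray V EF r1" by (rule ends_rays[OF b1 r1])
      have f2: "is_ray V EF r2" by (rule ends_rays[OF b2 r2])
      have g1: "is_ray V EG r1" by (rule is_ray_mono[OF assms(1) f1])
      have g2: "is_ray V EG r2" by (rule is_ray_mono[OF assms(1) f2])
      have "gend V EG \<beta>1 = gend V EG \<beta>2" using eq End End2 by (simp add: psi_def)
      then have "cls V EG r1 = cls V EG r2" unfolding gend_def r1_def r2_def .
      then have "ray_equiv V EG r1 r2" using cls_eq_iff[OF g1 g2] by simp
      then have "ray_equiv V EF r1 r2" using assms(2) f1 f2 unfolding faithful_def by blast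
      then have "cls V EF r1 = cls V EF r2" using cls_eq_iff[OF f1 f2] by simp
      then have "\<beta>1 = \<beta>2" using end_cls_any[OF b1 r1] end_cls_any[OF b2 r2] by simp
      then show ?thesis using End End2 by simp
    qed
  qed
qed

lemma enb_vtx: "v \<in> C \<Longrightarrow> vtx v \<in> enb V E C"
  unfolding enb_def by blast

lemma enb_inner: "e \<in> E \<Longrightarrow> e \<inter> C \<noteq> {} \<Longrightarrow> p \<in> inner_pts e \<Longrightarrow> p \<in> enb V E C"
  unfolding enb_def by blast

lemma enb_End: "\<beta> \<in> ends V E \<Longrightarrow> \<forall>r\<in>\<beta>. has_tail_in r C \<Longrightarrow> End \<beta> \<in> enb V E C"
  unfolding enb_def by blast


lemma graph_card: "graph V E \<Longrightarrow> e \<in> E \<Longrightarrow> card e = 2"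
  unfolding graph_def by blast

lemma graph_sub: "graph V E \<Longrightarrow> e \<in> E \<Longrightarrow> e \<subseteq> V"
  unfolding graph_def by blast

lemma classifyE:
  assumes "x \<in> topspace (freudenthal V E)"
  obtains (Vx) v where "v \<in> V" "x = vtx v" | (Ix) e where "e \<in> E" "x \<in> inner_pts e"
    | (Nx) \<beta> where "\<beta> \<in> ends V E" "x = End \<beta>"
  using classify[OF assms] by blast

lemma ei_obtain: "U \<in> edge_intervals V E \<Longrightarrow> \<exists>e u a b. U = ival e u a b \<and> e \<in> E \<and> u \<in> e"
  unfolding edge_intervals_def ival_def by (simp only: mem_Collect_eq)

lemma vs_obtain: "U \<in> vertex_stars V E \<Longrightarrow> \<exists>v \<epsilon>. U = star E v \<epsilon> \<and> v \<in> V \<and> 0 < \<epsilon>"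
  unfolding vertex_stars_def star_def by (simp only: mem_Collect_eq)

lemma en_obtain: "U \<in> end_nbhds V E \<Longrightarrow> \<exists>S C. U = enb V E C \<and> (finite S \<and> S \<subseteq> V \<and> C \<in> components V E S \<and>
             (\<exists>\<alpha>\<in>ends V E. \<forall>r\<in>\<alpha>. has_tail_in r C))"
  unfolding end_nbhds_def enb_def by (simp only: mem_Collect_eq)

lemma ival_D: "y \<in> ival e u a b \<Longrightarrow> \<exists>f. y = Pt f \<and> Pt f \<in> inner_pts e \<and> a < f u \<and> f u < b"
  unfolding ival_def by blast

lemma star_D: "y \<in> star E v \<epsilon> \<Longrightarrow> y = vtx v \<or> (\<exists>f e. y = Pt f \<and> e \<in> E \<and> v \<in> e \<and> Pt f \<in> inner_pts e \<and> 1 - \<epsilon> < f v)"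
  unfolding star_def by blast

lemma star_I1: "vtx v \<in> star E v \<epsilon>"
  unfolding star_def by blast

lemma star_I2: "e \<in> E \<Longrightarrow> v \<in> e \<Longrightarrow> Pt f \<in> inner_pts e \<Longrightarrow> 1 - \<epsilon> < f v \<Longrightarrow> Pt f \<in> star E v \<epsilon>"
  unfolding star_def by blast

lemma pre_ival:
  assumes g: "graph V EG" and sub: "EF \<subseteq> EG" and e: "e \<in> EG" "u \<in> e"
  shows "openin (freudenthal V EF) (psi V EG -` ival e u a b \<inter> topspace (freudenthal V EF))"
proof (cases "e \<in> EF")
  case True
  have "psi V EG -` ival e u a b \<inter> topspace (freudenthal V EF) = ival e u a b"
  proof
    show "psi V EG -` ival e u a b \<inter> topspace (freudenthal V EF) \<subseteq> ival e u a b"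
    proof
      fix x assume "x \<in> psi V EG -` ival e u a b \<inter> topspace (freudenthal V EF)"
      then have xi: "psi V EG x \<in> ival e u a b" by simp
      then obtain f where f: "psi V EG x = Pt f" using ival_D[OF xi] by blast
      then have "x = Pt f" by (rule psi_Pt_pre)
      then show "x \<in> ival e u a b" using f \<open>psi V EG x \<in> ival e u a b\<close> by simp
    qed
    show "ival e u a b \<subseteq> psi V EG -` ival e u a b \<inter> topspace (freudenthal V EF)"
    proof
      fix x assume x: "x \<in> ival e u a b"
      have t: "x \<in> topspace (freudenthal V EF)" by (rule sub_topspace[OF open_ival[OF True e(2)] x])
      obtain f where "x = Pt f" using ival_D[OF x] by blast
      then have "psi V EG x = x" by (simp add: psi_Pt)
      then show "x \<in> psi V EG -` ival e u a b \<inter> topspace (freudenthal V EF)" using x t by simp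
    qed
  qed
  then show ?thesis using open_ival[OF True e(2), of V a b] by simp
next
  case False
  have c: "card e = 2" by (rule graph_card[OF g e(1)])
  have "psi V EG -` ival e u a b \<inter> topspace (freudenthal V EF) = {}"
  proof (rule ccontr)
    assume "psi V EG -` ival e u a b \<inter> topspace (freudenthal V EF) \<noteq> {}"
    then obtain x where x: "psi V EG x \<in> ival e u a b" "x \<in> topspace (freudenthal V EF)" by blast
    obtain f where f: "psi V EG x = Pt f" "Pt f \<in> inner_pts e" using ival_D[OF x(1)] by blast
    have xf: "x = Pt f" by (rule psi_Pt_pre[OF f(1)])
    from x(2) show False
    proof (cases rule: classifyE)
      case (Vx v)
      then show False using vtx_not_inner[OF c, of v] xf f(2) by simp
    next
      case (Ix e')
      then have "e = e'" using inner_disj[OF f(2)] xf by simp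
      then show False using Ix False by simp
    next
      case (Nx \<beta>)
      then show False using xf by simp
    qed
  qed
  then show ?thesis by simp
qed

lemma pre_star:
  assumes g: "graph V EG" and sub: "EF \<subseteq> EG" and v: "v \<in> V" "0 < \<epsilon>"
  shows "openin (freudenthal V EF) (psi V EG -` star EG v \<epsilon> \<inter> topspace (freudenthal V EF))"
proof -
  have "psi V EG -` star EG v \<epsilon> \<inter> topspace (freudenthal V EF) = star EF v \<epsilon>"
  proof
    show "psi V EG -` star EG v \<epsilon> \<inter> topspace (freudenthal V EF) \<subseteq> star EF v \<epsilon>"
    proof
      fix x assume "x \<in> psi V EG -` star EG v \<epsilon> \<inter> topspace (freudenthal V EF)"
      then have x: "psi V EG x \<in> star EG v \<epsilon>" "x \<in> topspace (freudenthal V EF)" by simp_all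
      from star_D[OF x(1)] show "x \<in> star EF v \<epsilon>"
      proof (elim disjE exE conjE)
        assume "psi V EG x = vtx v"
        moreover obtain h where "vtx v = Pt h" using vtx_Pt[of v] by blast
        ultimately have "psi V EG x = Pt h" by simp
        then have "x = Pt h" by (rule psi_Pt_pre)
        then have "x = vtx v" using \<open>vtx v = Pt h\<close> by simp
        then show ?thesis using star_I1 by simp
      next
        fix f e assume a: "psi V EG x = Pt f" "e \<in> EG" "v \<in> e" "Pt f \<in> inner_pts e" "1 - \<epsilon> < f v"
        have xf: "x = Pt f" by (rule psi_Pt_pre[OF a(1)])
        have c: "card e = 2" by (rule graph_card[OF g a(2)])
        from x(2) show ?thesis
        proof (cases rule: classifyE)
          case (Vx w)
          then show ?thesis using vtx_not_inner[OF c, of w] xf a(4) by simp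
        next
          case (Ix e')
          then have "e = e'" using inner_disj[OF a(4)] xf by simp
          then have "e \<in> EF" using Ix by simp
          then have "Pt f \<in> star EF v \<epsilon>" by (rule star_I2[OF _ a(3) a(4) a(5)])
          then show ?thesis using xf by simp
        next
          case (Nx \<beta>)
          then show ?thesis using xf by simp
        qed
      qed
    qed
    show "star EF v \<epsilon> \<subseteq> psi V EG -` star EG v \<epsilon> \<inter> topspace (freudenthal V EF)"
    proof
      fix x assume x: "x \<in> star EF v \<epsilon>"
      have t: "x \<in> topspace (freudenthal V EF)" by (rule sub_topspace[OF open_star[OF v] x])
      have "psi V EG x \<in> star EG v \<epsilon>"
        using star_D[OF x]
      proof (elim disjE exE conjE)
        assume "x = vtx v" then show ?thesis by (simp add: psi_vtx star_I1)
      next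
        fix f e assume a: "x = Pt f" "e \<in> EF" "v \<in> e" "Pt f \<in> inner_pts e" "1 - \<epsilon> < f v"
        have "e \<in> EG" using a(2) sub by blast
        then have "Pt f \<in> star EG v \<epsilon>" by (rule star_I2[OF _ a(3) a(4) a(5)])
        then show ?thesis using a(1) by (simp add: psi_Pt)
      qed
      then show "x \<in> psi V EG -` star EG v \<epsilon> \<inter> topspace (freudenthal V EF)" using t by simp
    qed
  qed
  then show ?thesis using open_star[OF v, of EF] by simp
qed

lemma pre_enb:
  assumes g: "graph V EG" and sub: "EF \<subseteq> EG" and S: "finite S" "S \<subseteq> V" and C: "C \<in> components V EG S"
  shows "openin (freudenthal V EF) (psi V EG -` enb V EG C \<inter> topspace (freudenthal V EF))"
proof (subst openin_subopen, intro ballI)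
  fix x assume "x \<in> psi V EG -` enb V EG C \<inter> topspace (freudenthal V EF)"
  then have hx: "psi V EG x \<in> enb V EG C" and xt: "x \<in> topspace (freudenthal V EF)" by simp_all
  let ?P = "psi V EG -` enb V EG C \<inter> topspace (freudenthal V EF)"
  from xt show "\<exists>T. openin (freudenthal V EF) T \<and> x \<in> T \<and> T \<subseteq> ?P"
  proof (cases rule: classifyE)
    case (Vx w)
    have pw: "psi V EG x = vtx w" using Vx(2) by (simp add: psi_vtx)
    have wC: "w \<in> C"
      using enb_D[OF hx]
    proof (elim disjE bexE conjE exE)
      fix v' assume "v' \<in> C" "psi V EG x = vtx v'"
      then show "w \<in> C" using pw vtx_inj[of w v'] by simp
    next
      fix e assume a: "e \<in> EG" "e \<inter> C \<noteq> {}" "psi V EG x \<in> inner_pts e"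
      have "card e = 2" by (rule graph_card[OF g a(1)])
      then show "w \<in> C" using vtx_not_inner[of e w] a(3) pw by simp
    next
      fix \<beta> assume "psi V EG x = End \<beta>"
      then show "w \<in> C" using pw vtx_not_End[of w \<beta>] by simp
    qed
    let ?T = "star EF w 1"
    have oT: "openin (freudenthal V EF) ?T" by (rule open_star[OF Vx(1)]) simp
    have "?T \<subseteq> ?P"
    proof
      fix y assume y: "y \<in> ?T"
      have yt: "y \<in> topspace (freudenthal V EF)" by (rule sub_topspace[OF oT y])
      have "psi V EG y \<in> enb V EG C"
        using star_D[OF y]
      proof (elim disjE exE conjE)
        assume "y = vtx w"
        then show ?thesis using enb_vtx[OF wC, of V EG] by (simp add: psi_vtx)
      next
        fix f e assume a: "y = Pt f" "e \<in> EF" "w \<in> e" "Pt f \<in> inner_pts e" "1 - 1 < f w"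
        have eG: "e \<in> EG" using a(2) sub by blast
        have "e \<inter> C \<noteq> {}" using a(3) wC by blast
        then have "Pt f \<in> enb V EG C" by (rule enb_inner[OF eG _ a(4)])
        then show ?thesis using a(1) by (simp add: psi_Pt)
      qed
      then show "y \<in> ?P" using yt by simp
    qed
    moreover have "x \<in> ?T" using Vx(2) star_I1[of w EF 1] by simp
    ultimately show ?thesis using oT by blast
  next
    case (Ix e')
    have e'G: "e' \<in> EG" using Ix(1) sub by blast
    have c: "card e' = 2" by (rule graph_card[OF g e'G])
    have px: "psi V EG x = x" by (rule psi_inner[OF Ix(2)])
    have e'C: "e' \<inter> C \<noteq> {}"
      using enb_D[OF hx]
    proof (elim disjE bexE conjE exE)
      fix v' assume "v' \<in> C" "psi V EG x = vtx v'"
      then show ?thesis using vtx_not_inner[OF c, of v'] Ix(2) px by simp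
    next
      fix e assume a: "e \<in> EG" "e \<inter> C \<noteq> {}" "psi V EG x \<in> inner_pts e"
      have "x \<in> inner_pts e" using a(3) px by simp
      then have "e' = e" by (rule inner_disj[OF Ix(2)])
      then show ?thesis using a(2) by simp
    next
      fix \<beta> assume "psi V EG x = End \<beta>"
      then show ?thesis using End_not_inner[of \<beta> e'] Ix(2) px by simp
    qed
    let ?T = "inner_pts e'"
    have oT: "openin (freudenthal V EF) ?T" by (rule open_inner[OF Ix(1) c])
    have "?T \<subseteq> ?P"
    proof
      fix y assume y: "y \<in> ?T"
      have yt: "y \<in> topspace (freudenthal V EF)" by (rule sub_topspace[OF oT y])
      have "y \<in> enb V EG C" by (rule enb_inner[OF e'G e'C y])
      then show "y \<in> ?P" using yt psi_inner[OF y, of V EG] by simp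
    qed
    then show ?thesis using oT Ix(2) by blast
  next
    case (Nx \<beta>)
    have px: "psi V EG x = End (gend V EG \<beta>)" using Nx(2) by (simp add: psi_End)
    have tailG: "\<forall>r\<in>gend V EG \<beta>. has_tail_in r C"
      using enb_D[OF hx]
    proof (elim disjE bexE conjE exE)
      fix v' assume "v' \<in> C" "psi V EG x = vtx v'"
      then show ?thesis using px vtx_not_End[of v' "gend V EG \<beta>"] by simp
    next
      fix e assume a: "e \<in> EG" "e \<inter> C \<noteq> {}" "psi V EG x \<in> inner_pts e"
      then show ?thesis using px End_not_inner[of "gend V EG \<beta>" e] by simp
    next
      fix \<beta>' assume "psi V EG x = End \<beta>'" "\<beta>' \<in> ends V EG" "\<forall>r\<in>\<beta>'. has_tail_in r C"
      then show ?thesis using px by simp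
    qed
    obtain C' where C': "C' \<in> components V EF S" "\<forall>r\<in>\<beta>. has_tail_in r C'"
      using end_comp[OF Nx(1) S] by blast
    obtain D where D: "D \<in> components V EG S" "C' \<subseteq> D" using comp_in_comp[OF sub C'(1)] by blast
    define r0 where "r0 = (SOME r. r \<in> \<beta>)"
    have r0: "r0 \<in> \<beta>" unfolding r0_def by (rule some_in[OF Nx(1)])
    have "has_tail_in r0 D" using tail_mono[of r0 C' D] C'(2) r0 D(2) by blast
    moreover have "has_tail_in r0 C" using tailG gend_mem[OF sub Nx(1) r0] by blast
    ultimately have "D = C" by (rule tail_unique[OF D(1) C])
    then have C'C: "C' \<subseteq> C" using D(2) by simp
    let ?T = "enb V EF C'"
    have oT: "openin (freudenthal V EF) ?T" by (rule open_enb[OF S C'(1) Nx(1) C'(2)])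
    have "?T \<subseteq> ?P"
    proof
      fix y assume y: "y \<in> ?T"
      have yt: "y \<in> topspace (freudenthal V EF)" by (rule sub_topspace[OF oT y])
      have "psi V EG y \<in> enb V EG C"
        using enb_D[OF y]
      proof (elim disjE bexE conjE exE)
        fix v assume "v \<in> C'" "y = vtx v"
        then show ?thesis using enb_vtx[of v C V EG] C'C by (auto simp: psi_vtx)
      next
        fix e assume a: "e \<in> EF" "e \<inter> C' \<noteq> {}" "y \<in> inner_pts e"
        have eG: "e \<in> EG" using a(1) sub by blast
        have "e \<inter> C \<noteq> {}" using a(2) C'C by blast
        then have "y \<in> enb V EG C" by (rule enb_inner[OF eG _ a(3)])
        then show ?thesis using psi_inner[OF a(3), of V EG] by simp
      next
        fix \<gamma> assume a: "y = End \<gamma>" "\<gamma> \<in> ends V EF" "\<forall>r\<in>\<gamma>. has_tail_in r C'"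
        define r1 where "r1 = (SOME r. r \<in> \<gamma>)"
        have r1: "r1 \<in> \<gamma>" unfolding r1_def by (rule some_in[OF a(2)])
        have r1F: "is_ray V EF r1" by (rule ends_rays[OF a(2) r1])
        have r1G: "is_ray V EG r1" by (rule is_ray_mono[OF sub r1F])
        have t1: "has_tail_in r1 C" using tail_mono[of r1 C' C] a(3) r1 C'C by blast
        have "\<forall>r''\<in>gend V EG \<gamma>. has_tail_in r'' C"
        proof
          fix r'' assume "r'' \<in> gend V EG \<gamma>"
          then have "r'' \<in> cls V EG r1" unfolding gend_def r1_def .
          then show "has_tail_in r'' C" by (rule cls_tail[OF r1G t1 C S])
        qed
        then have "End (gend V EG \<gamma>) \<in> enb V EG C" by (rule enb_End[OF gend_ends[OF sub a(2)]])
        then show ?thesis using a(1) by (simp add: psi_End)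
      qed
      then show "y \<in> ?P" using yt by simp
    qed
    moreover have "x \<in> ?T" using enb_End[OF Nx(1) C'(2)] Nx(2) by simp
    ultimately show ?thesis using oT by blast
  qed
qed

lemma psi_cont:
  assumes g: "graph V EG" and sub: "EF \<subseteq> EG"
  shows "continuous_map (freudenthal V EF) (freudenthal V EG) (psi V EG)"
proof -
  have "continuous_map (freudenthal V EF)
     (topology_generated_by (edge_intervals V EG \<union> vertex_stars V EG \<union> end_nbhds V EG)) (psi V EG)"
  proof (rule continuous_on_generated_topo)
    fix U assume "U \<in> edge_intervals V EG \<union> vertex_stars V EG \<union> end_nbhds V EG"
    then consider (a) "U \<in> edge_intervals V EG" | (b) "U \<in> vertex_stars V EG" | (c) "U \<in> end_nbhds V EG"
      by blast
    then show "openin (freudenthal V EF) (psi V EG -` U \<inter> topspace (freudenthal V EF))"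
    proof cases
      case a
      then obtain e u a b where "U = ival e u a b" "e \<in> EG" "u \<in> e" using ei_obtain[OF a] by blast
      then show ?thesis using pre_ival[OF g sub, of e u a b] by simp
    next
      case b
      then obtain v \<epsilon> where "U = star EG v \<epsilon>" "v \<in> V" "0 < \<epsilon>" using vs_obtain[OF b] by blast
      then show ?thesis using pre_star[OF g sub, of v \<epsilon>] by simp
    next
      case c
      then obtain S C where "U = enb V EG C" "finite S" "S \<subseteq> V" "C \<in> components V EG S"
        using en_obtain[OF c] by blast
      then show ?thesis using pre_enb[OF g sub, of S C] by simp
    qed
  next
    have "psi V EG ` topspace (freudenthal V EF) \<subseteq> topspace (freudenthal V EG)"
    proof
      fix y assume "y \<in> psi V EG ` topspace (freudenthal V EF)"
      then obtain x where x: "x \<in> topspace (freudenthal V EF)" "y = psi V EG x" by blast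
      from x(1) show "y \<in> topspace (freudenthal V EG)"
      proof (cases rule: classifyE)
        case (Vx v)
        then show ?thesis using x(2) vtx_top[OF Vx(1), of EG] by (simp add: psi_vtx)
      next
        case (Ix e)
        have eG: "e \<in> EG" using Ix(1) sub by blast
        have "x \<in> topspace (freudenthal V EG)" by (rule inner_top[OF eG graph_card[OF g eG] Ix(2)])
        then show ?thesis using x(2) psi_inner[OF Ix(2), of V EG] by simp
      next
        case (Nx \<beta>)
        have "End (gend V EG \<beta>) \<in> topspace (freudenthal V EG)" by (rule end_top[OF gend_ends[OF sub Nx(1)]])
        then show ?thesis using x(2) Nx(2) by (simp add: psi_End)
      qed
    qed
    then show "psi V EG ` topspace (freudenthal V EF) \<subseteq> \<Union> (edge_intervals V EG \<union> vertex_stars V EG \<union> end_nbhds V EG)"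
      using topspace_fr[of V EG] by simp
  qed
  then show ?thesis unfolding freudenthal_def[of V EG] .
qed


definition sep :: "'a topology \<Rightarrow> 'a \<Rightarrow> 'a \<Rightarrow> bool" where
  "sep T x y \<longleftrightarrow> (\<exists>U W. openin T U \<and> openin T W \<and> x \<in> U \<and> y \<in> W \<and> U \<inter> W = {})"

lemma sep_sym: "sep T x y \<Longrightarrow> sep T y x"
  unfolding sep_def by blast

lemma sepI: "openin T U \<Longrightarrow> openin T W \<Longrightarrow> x \<in> U \<Longrightarrow> y \<in> W \<Longrightarrow> (\<And>z. z \<in> U \<Longrightarrow> z \<in> W \<Longrightarrow> False) \<Longrightarrow> sep T x y"
  unfolding sep_def by blast

lemma sep_vv:
  assumes g: "graph V E" and v: "v \<in> V" "w \<in> V" "v \<noteq> w"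
  shows "sep (freudenthal V E) (vtx v) (vtx w)"
proof (rule sepI[OF open_star[OF v(1)] open_star[OF v(2)] star_I1 star_I1])
  show "(0::real) < 1/2" by simp
  show "(0::real) < 1/2" by simp
  fix z assume z1: "z \<in> star E v (1/2)" and z2: "z \<in> star E w (1/2)"
  from star_D[OF z1] show False
  proof (elim disjE exE conjE)
    assume a: "z = vtx v"
    from star_D[OF z2] show False
    proof (elim disjE exE conjE)
      assume "z = vtx w" then show False using a vtx_inj[of v w] v(3) by simp
    next
      fix f e assume b: "z = Pt f" "e \<in> E" "w \<in> e" "Pt f \<in> inner_pts e" "1 - 1/2 < f w"
      show False using vtx_not_inner[OF graph_card[OF g b(2)], of v] a b(1) b(4) by simp
    qed
  next
    fix f e assume a: "z = Pt f" "e \<in> E" "v \<in> e" "Pt f \<in> inner_pts e" "1 - 1/2 < f v"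
    from star_D[OF z2] show False
    proof (elim disjE exE conjE)
      assume "z = vtx w" then show False using vtx_not_inner[OF graph_card[OF g a(2)], of w] a(1) a(4) by simp
    next
      fix f' e' assume b: "z = Pt f'" "e' \<in> E" "w \<in> e'" "Pt f' \<in> inner_pts e'" "1 - 1/2 < f' w"
      have ff: "f' = f" using a(1) b(1) by simp
      have "e = e'" using inner_disj[OF a(4)] b(4) ff by simp
      then have "f v + f w = 1" using inner_sum2[OF graph_card[OF g a(2)] a(3) _ v(3) a(4)] b(3) by simp
      then show False using a(5) b(5) ff by simp
    qed
  qed
qed

lemma sep_vi:
  assumes g: "graph V E" and v: "v \<in> V" and e: "e \<in> E" "p \<in> inner_pts e"
  shows "sep (freudenthal V E) (vtx v) p"
proof -
  have c: "card e = 2" by (rule graph_card[OF g e(1)])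
  obtain gg where p: "p = Pt gg" using inner_Pt[OF e(2)] by blast
  show ?thesis
  proof (cases "v \<in> e")
    case True
    define b where "b = (1 + gg v) / 2"
    have lt: "gg v < 1" using inner_lt1[OF c True] e(2) p by simp
    have pos: "0 < gg v" using inner_D[of gg e] e(2) p True by simp
    have b1: "0 < 1 - b" using lt unfolding b_def by simp
    show ?thesis
    proof (rule sepI[OF open_star[OF v b1] open_ival[OF e(1) True] star_I1])
      show "p \<in> ival e v (-1) b" unfolding ival_def using e(2) p pos lt unfolding b_def by auto
      fix z assume z1: "z \<in> star E v (1 - b)" and z2: "z \<in> ival e v (-1) b"
      obtain f where f: "z = Pt f" "Pt f \<in> inner_pts e" "f v < b" using ival_D[OF z2] by blast
      from star_D[OF z1] show False
      proof (elim disjE exE conjE)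
        assume "z = vtx v" then show False using vtx_not_inner[OF c, of v] f by simp
      next
        fix f' e' assume a: "z = Pt f'" "e' \<in> E" "v \<in> e'" "Pt f' \<in> inner_pts e'" "1 - (1 - b) < f' v"
        then show False using f by simp
      qed
    qed
  next
    case False
    show ?thesis
    proof (rule sepI[OF open_star[OF v] open_inner[OF e(1) c] star_I1 e(2)])
      show "(0::real) < 1/2" by simp
      fix z assume z1: "z \<in> star E v (1/2)" and z2: "z \<in> inner_pts e"
      from star_D[OF z1] show False
      proof (elim disjE exE conjE)
        assume "z = vtx v" then show False using vtx_not_inner[OF c, of v] z2 by simp
      next
        fix f' e' assume a: "z = Pt f'" "e' \<in> E" "v \<in> e'" "Pt f' \<in> inner_pts e'" "1 - 1/2 < f' v"
        have "f' v = 0" using inner_D[of f' e] z2 a(1) False by simp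
        then show False using a(5) by simp
      qed
    qed
  qed
qed

lemma sep_ival:
  assumes g: "graph V E" and e: "e \<in> E" "u \<in> e" "Pt g1 \<in> inner_pts e" "Pt h \<in> inner_pts e" "g1 u < h u"
  shows "sep (freudenthal V E) (Pt g1) (Pt h)"
proof -
  have c: "card e = 2" by (rule graph_card[OF g e(1)])
  define m where "m = (g1 u + h u) / 2"
  have pos: "0 < g1 u" using inner_D[of g1 e] e(3) e(2) by simp
  have lt: "h u < 1" using inner_lt1[OF c e(2) e(4)] .
  show ?thesis
  proof (rule sepI[OF open_ival[OF e(1) e(2), of V "-1" m] open_ival[OF e(1) e(2), of V m 2]])
    show "Pt g1 \<in> ival e u (-1) m" unfolding ival_def using e(3) pos e(5) unfolding m_def by auto
    show "Pt h \<in> ival e u m 2" unfolding ival_def using e(4) lt e(5) unfolding m_def by auto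
    fix z assume z1: "z \<in> ival e u (-1) m" and z2: "z \<in> ival e u m 2"
    obtain f where f: "z = Pt f" "f u < m" using ival_D[OF z1] by blast
    obtain f' where f': "z = Pt f'" "m < f' u" using ival_D[OF z2] by blast
    show False using f f' by simp
  qed
qed

lemma sep_ii:
  assumes g: "graph V E" and e: "e \<in> E" "p \<in> inner_pts e" "e' \<in> E" "q \<in> inner_pts e'" "p \<noteq> q"
  shows "sep (freudenthal V E) p q"
proof (cases "e = e'")
  case False
  show ?thesis
  proof (rule sepI[OF open_inner[OF e(1) graph_card[OF g e(1)]] open_inner[OF e(3) graph_card[OF g e(3)]] e(2) e(4)])
    fix z assume "z \<in> inner_pts e" "z \<in> inner_pts e'"
    then have "e = e'" by (rule inner_disj)
    then show False using False by simp
  qed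
next
  case True
  obtain g1 where p: "p = Pt g1" using inner_Pt[OF e(2)] by blast
  obtain h where q: "q = Pt h" using inner_Pt[OF e(4)] by blast
  have "g1 \<noteq> h" using p q e(5) by simp
  then obtain u where u: "g1 u \<noteq> h u" by blast
  have ue: "u \<in> e"
  proof (rule ccontr)
    assume "u \<notin> e"
    then have "g1 u = 0" "h u = 0" using inner_D[of g1 e] inner_D[of h e] e(2) e(4) True p q by simp_all
    then show False using u by simp
  qed
  have pe: "Pt g1 \<in> inner_pts e" using e(2) p by simp
  have qe: "Pt h \<in> inner_pts e" using e(4) q True by simp
  show ?thesis
  proof (cases "g1 u < h u")
    case True
    show ?thesis using sep_ival[OF g e(1) ue pe qe True] p q by simp
  next
    case False
    then have "h u < g1 u" using u by simp
    then show ?thesis using sep_sym[OF sep_ival[OF g e(1) ue qe pe]] p q by simp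
  qed
qed

lemma card2_finite: "card e = 2 \<Longrightarrow> finite e"
  by (rule card_ge_0_finite) simp

lemma sep_Nv:
  assumes g: "graph V E" and lf: "locally_finite V E" and a: "\<alpha> \<in> ends V E" and v: "v \<in> V"
  shows "sep (freudenthal V E) (End \<alpha>) (vtx v)"
proof -
  define S where "S = insert v (\<Union>{e\<in>E. v \<in> e})"
  have fe: "finite {e\<in>E. v \<in> e}" using lf v unfolding locally_finite_def by blast
  have "\<forall>e\<in>{e\<in>E. v \<in> e}. finite e" using card2_finite graph_card[OF g] by blast
  then have fS: "finite S" unfolding S_def using fe by blast
  have SV: "S \<subseteq> V" unfolding S_def using v graph_sub[OF g] by blast
  obtain C where C: "C \<in> components V E S" "\<forall>r\<in>\<alpha>. has_tail_in r C" using end_comp[OF a fS SV] by blast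
  have CS: "C \<subseteq> V - S" by (rule components_sub[OF C(1)])
  show ?thesis
  proof (rule sepI[OF open_enb[OF fS SV C(1) a C(2)] open_star[OF v] enb_End[OF a C(2)] star_I1])
    show "(0::real) < 1/2" by simp
    fix z assume z1: "z \<in> enb V E C" and z2: "z \<in> star E v (1/2)"
    from enb_D[OF z1] show False
    proof (elim disjE bexE conjE exE)
      fix w assume b: "w \<in> C" "z = vtx w"
      from star_D[OF z2] show False
      proof (elim disjE exE conjE)
        assume "z = vtx v" then have "w = v" using b(2) vtx_inj[of w v] by simp
        then show False using b(1) CS unfolding S_def by blast
      next
        fix f' e' assume c: "z = Pt f'" "e' \<in> E" "v \<in> e'" "Pt f' \<in> inner_pts e'" "1 - 1/2 < f' v"
        then show False using vtx_not_inner[OF graph_card[OF g c(2)], of w] b(2) by simp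
      qed
    next
      fix e'' assume b: "e'' \<in> E" "e'' \<inter> C \<noteq> {}" "z \<in> inner_pts e''"
      from star_D[OF z2] show False
      proof (elim disjE exE conjE)
        assume "z = vtx v" then show False using vtx_not_inner[OF graph_card[OF g b(1)], of v] b(3) by simp
      next
        fix f' e' assume c: "z = Pt f'" "e' \<in> E" "v \<in> e'" "Pt f' \<in> inner_pts e'" "1 - 1/2 < f' v"
        have "e'' = e'" using inner_disj[OF b(3)] c(1) c(4) by simp
        then have "e'' \<subseteq> S" unfolding S_def using c(2) c(3) by blast
        then show False using b(2) CS by blast
      qed
    next
      fix \<beta> assume b: "z = End \<beta>"
      from star_D[OF z2] show False
      proof (elim disjE exE conjE)
        assume "z = vtx v" then show False using b vtx_not_End[of v \<beta>] by simp
      next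
        fix f' e' assume "z = Pt f'" then show False using b by simp
      qed
    qed
  qed
qed

lemma sep_Ni:
  assumes g: "graph V E" and a: "\<alpha> \<in> ends V E" and e: "e \<in> E" "p \<in> inner_pts e"
  shows "sep (freudenthal V E) (End \<alpha>) p"
proof -
  have c: "card e = 2" by (rule graph_card[OF g e(1)])
  have fS: "finite e" by (rule card2_finite[OF c])
  have SV: "e \<subseteq> V" by (rule graph_sub[OF g e(1)])
  obtain C where C: "C \<in> components V E e" "\<forall>r\<in>\<alpha>. has_tail_in r C" using end_comp[OF a fS SV] by blast
  have CS: "C \<subseteq> V - e" by (rule components_sub[OF C(1)])
  show ?thesis
  proof (rule sepI[OF open_enb[OF fS SV C(1) a C(2)] open_inner[OF e(1) c] enb_End[OF a C(2)] e(2)])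
    fix z assume z1: "z \<in> enb V E C" and z2: "z \<in> inner_pts e"
    from enb_D[OF z1] show False
    proof (elim disjE bexE conjE exE)
      fix w assume b: "w \<in> C" "z = vtx w"
      then show False using vtx_not_inner[OF c, of w] z2 by simp
    next
      fix e'' assume b: "e'' \<in> E" "e'' \<inter> C \<noteq> {}" "z \<in> inner_pts e''"
      have "e'' = e" by (rule inner_disj[OF b(3) z2])
      then show False using b(2) CS by blast
    next
      fix \<beta> assume b: "z = End \<beta>"
      then show False using End_not_inner[of \<beta> e] z2 by simp
    qed
  qed
qed

lemma sep_NN:
  assumes g: "graph V E" and a: "\<alpha> \<in> ends V E" "\<beta> \<in> ends V E" "\<alpha> \<noteq> \<beta>"
  shows "sep (freudenthal V E) (End \<alpha>) (End \<beta>)"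
proof -
  obtain r where r: "r \<in> \<alpha>" "is_ray V E r" using ends_nonempty[OF a(1)] by blast
  obtain r' where r': "r' \<in> \<beta>" "is_ray V E r'" using ends_nonempty[OF a(2)] by blast
  have "\<not> ray_equiv V E r r'"
  proof
    assume "ray_equiv V E r r'"
    then have "cls V E r = cls V E r'" using cls_eq_iff[OF r(2) r'(2)] by simp
    then show False using end_cls_any[OF a(1) r(1)] end_cls_any[OF a(2) r'(1)] a(3) by simp
  qed
  then obtain S where S: "finite S" "S \<subseteq> V" "\<not> (\<exists>C\<in>components V E S. has_tail_in r C \<and> has_tail_in r' C)"
    unfolding ray_equiv_def by blast
  obtain C1 where C1: "C1 \<in> components V E S" "\<forall>r\<in>\<alpha>. has_tail_in r C1" using end_comp[OF a(1) S(1,2)] by blast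
  obtain C2 where C2: "C2 \<in> components V E S" "\<forall>r\<in>\<beta>. has_tail_in r C2" using end_comp[OF a(2) S(1,2)] by blast
  have ne: "C1 \<noteq> C2"
  proof
    assume "C1 = C2"
    then have "has_tail_in r C1" "has_tail_in r' C1" using C1(2) C2(2) r(1) r'(1) by auto
    then show False using S(3) C1(1) by blast
  qed
  show ?thesis
  proof (rule sepI[OF open_enb[OF S(1,2) C1(1) a(1) C1(2)] open_enb[OF S(1,2) C2(1) a(2) C2(2)]
        enb_End[OF a(1) C1(2)] enb_End[OF a(2) C2(2)]])
    fix z assume z1: "z \<in> enb V E C1" and z2: "z \<in> enb V E C2"
    from enb_D[OF z1] show False
    proof (elim disjE bexE conjE exE)
      fix w assume b: "w \<in> C1" "z = vtx w"
      from enb_D[OF z2] show False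
      proof (elim disjE bexE conjE exE)
        fix w' assume c: "w' \<in> C2" "z = vtx w'"
        then have "w = w'" using b(2) vtx_inj[of w w'] by simp
        then show False using components_disj[OF C1(1) C2(1) b(1)] c(1) ne by simp
      next
        fix e assume c: "e \<in> E" "e \<inter> C2 \<noteq> {}" "z \<in> inner_pts e"
        then show False using vtx_not_inner[OF graph_card[OF g c(1)], of w] b(2) by simp
      next
        fix \<gamma> assume "z = End \<gamma>" then show False using b(2) vtx_not_End[of w \<gamma>] by simp
      qed
    next
      fix e1 assume b: "e1 \<in> E" "e1 \<inter> C1 \<noteq> {}" "z \<in> inner_pts e1"
      from enb_D[OF z2] show False
      proof (elim disjE bexE conjE exE)
        fix w' assume c: "w' \<in> C2" "z = vtx w'"
        then show False using vtx_not_inner[OF graph_card[OF g b(1)], of w'] b(3) by simp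
      next
        fix e2 assume c: "e2 \<in> E" "e2 \<inter> C2 \<noteq> {}" "z \<in> inner_pts e2"
        have ee: "e1 = e2" by (rule inner_disj[OF b(3) c(3)])
        obtain x1 where x1: "x1 \<in> e1" "x1 \<in> C1" using b(2) by blast
        obtain x2 where x2: "x2 \<in> e1" "x2 \<in> C2" using c(2) ee by blast
        show False
        proof (cases "x1 = x2")
          case True
          then show False using components_disj[OF C1(1) C2(1) x1(2)] x2(2) ne by simp
        next
          case False
          obtain w where w: "w \<noteq> x1" "e1 = {x1, w}" using card2[OF graph_card[OF g b(1)] x1(1)] by blast
          have "x2 = w" using x2(1) w(2) False by blast
          then have ed: "{x1, x2} \<in> E" using w(2) b(1) by simp
          have "x2 \<in> V - S" using components_sub[OF C2(1)] x2(2) by blast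
          then have "x2 \<in> C1" by (rule components_edge[OF C1(1) x1(2) _ ed])
          then show False using components_disj[OF C1(1) C2(1) _ x2(2)] ne by simp
        qed
      next
        fix \<gamma> assume "z = End \<gamma>" then show False using b(3) End_not_inner[of \<gamma> e1] by simp
      qed
    next
      fix \<gamma> assume b: "z = End \<gamma>" "\<gamma> \<in> ends V E" "\<forall>r\<in>\<gamma>. has_tail_in r C1"
      from enb_D[OF z2] show False
      proof (elim disjE bexE conjE exE)
        fix w' assume c: "w' \<in> C2" "z = vtx w'"
        then show False using b(1) vtx_not_End[of w' \<gamma>] by simp
      next
        fix e2 assume c: "e2 \<in> E" "e2 \<inter> C2 \<noteq> {}" "z \<in> inner_pts e2"
        then show False using b(1) End_not_inner[of \<gamma> e2] by simp
      next
        fix \<gamma>' assume c: "z = End \<gamma>'" "\<gamma>' \<in> ends V E" "\<forall>r\<in>\<gamma>'. has_tail_in r C2"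
        have gg: "\<gamma>' = \<gamma>" using b(1) c(1) by simp
        obtain r0 where r0: "r0 \<in> \<gamma>" "is_ray V E r0" using ends_nonempty[OF b(2)] by blast
        have "has_tail_in r0 C1" "has_tail_in r0 C2" using b(3) c(3) gg r0(1) by auto
        then have "C1 = C2" by (rule tail_unique[OF C1(1) C2(1)])
        then show False using ne by simp
      qed
    qed
  qed
qed

lemma hausdorff:
  assumes g: "graph V E" and lf: "locally_finite V E"
  shows "Hausdorff_space (freudenthal V E)"
proof -
  have "sep (freudenthal V E) x y" if x: "x \<in> topspace (freudenthal V E)" and y: "y \<in> topspace (freudenthal V E)"
    and xy: "x \<noteq> y" for x y
  proof -
    from x show ?thesis
    proof (cases rule: classifyE)
      case (Vx v)
      from y show ?thesis
      proof (cases rule: classifyE)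
        case (Vx w)
        then show ?thesis using sep_vv[OF g \<open>v \<in> V\<close> \<open>w \<in> V\<close>] \<open>x = vtx v\<close> xy by auto
      next
        case (Ix e)
        then show ?thesis using sep_vi[OF g \<open>v \<in> V\<close> Ix(1,2)] \<open>x = vtx v\<close> by simp
      next
        case (Nx \<beta>)
        then show ?thesis using sep_sym[OF sep_Nv[OF g lf Nx(1) \<open>v \<in> V\<close>]] \<open>x = vtx v\<close> by simp
      qed
    next
      case (Ix e)
      from y show ?thesis
      proof (cases rule: classifyE)
        case (Vx w)
        then show ?thesis using sep_sym[OF sep_vi[OF g Vx(1) Ix(1,2)]] by simp
      next
        case (Ix e')
        then show ?thesis using sep_ii[OF g \<open>e \<in> E\<close> \<open>x \<in> inner_pts e\<close> Ix(1,2) xy] by simp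
      next
        case (Nx \<beta>)
        then show ?thesis using sep_sym[OF sep_Ni[OF g Nx(1) Ix(1,2)]] by simp
      qed
    next
      case (Nx \<alpha>)
      from y show ?thesis
      proof (cases rule: classifyE)
        case (Vx w)
        then show ?thesis using sep_Nv[OF g lf Nx(1) Vx(1)] Nx(2) by simp
      next
        case (Ix e')
        then show ?thesis using sep_Ni[OF g Nx(1) Ix(1,2)] Nx(2) by simp
      next
        case (Nx \<beta>)
        then show ?thesis using sep_NN[OF g \<open>\<alpha> \<in> ends V E\<close> Nx(1)] \<open>x = End \<alpha>\<close> xy by auto
      qed
    qed
  qed
  then show ?thesis unfolding Hausdorff_space_def sep_def disjnt_def by blast
qed

theorem lemma1:
  fixes V :: "'v set" and EG EF :: "'v set set"
  assumes "graph V EG"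
    and "infinite V"
    and "locally_finite V EG"
    and "EF \<subseteq> EG"
    and "faithful V EF V EG"
    and "\<exists>Z. hamiltonian_circle V EF Z"
  shows "\<exists>Z. hamiltonian_circle V EG Z"
proof -
  let ?X = "top_of_set (sphere (0::complex) 1)"
  obtain Z where hc: "hamiltonian_circle V EF Z" using assms(6) by blast
  then obtain \<phi> where emb: "embedding_map ?X (freudenthal V EF) \<phi>" "\<phi> ` sphere 0 1 = Z"
    and allv: "\<forall>v\<in>V. vtx v \<in> Z"
    unfolding hamiltonian_circle_def by blast
  have hm: "homeomorphic_map ?X (subtopology (freudenthal V EF) (\<phi> ` topspace ?X)) \<phi>"
    using emb(1) unfolding embedding_map_def .
  have c1: "continuous_map ?X (subtopology (freudenthal V EF) (\<phi> ` topspace ?X)) \<phi>"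
    by (rule homeomorphic_imp_continuous_map[OF hm])
  have c\<phi>: "continuous_map ?X (freudenthal V EF) \<phi>"
    using c1 unfolding continuous_map_in_subtopology by blast
  have inj\<phi>: "inj_on \<phi> (topspace ?X)" by (rule homeomorphic_imp_injective_map[OF hm])
  have cont: "continuous_map ?X (freudenthal V EG) (psi V EG \<circ> \<phi>)"
    by (rule continuous_map_compose[OF c\<phi> psi_cont[OF assms(1,4)]])
  have cpt: "compact_space ?X" by (rule compact_space_subtopology) simp
  have haus: "Hausdorff_space (freudenthal V EG)" by (rule hausdorff[OF assms(1,3)])
  have sub: "\<phi> ` topspace ?X \<subseteq> topspace (freudenthal V EF)"
    by (rule continuous_map_image_subset_topspace[OF c\<phi>])
  have inj: "inj_on (psi V EG \<circ> \<phi>) (topspace ?X)"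
  proof (rule comp_inj_on[OF inj\<phi>])
    show "inj_on (psi V EG) (\<phi> ` topspace ?X)" by (rule inj_on_subset[OF psi_inj[OF assms(4,5)] sub])
  qed
  have e2: "embedding_map ?X (freudenthal V EG) (psi V EG \<circ> \<phi>)"
    by (rule continuous_imp_embedding_map[OF cont cpt haus inj])
  have allv2: "\<forall>v\<in>V. vtx v \<in> (psi V EG \<circ> \<phi>) ` sphere 0 1"
  proof
    fix v assume "v \<in> V"
    then have "vtx v \<in> \<phi> ` sphere 0 1" using allv emb(2) by simp
    then obtain z where z: "z \<in> sphere 0 1" "vtx v = \<phi> z" by blast
    have "(psi V EG \<circ> \<phi>) z = vtx v" using z(2) psi_vtx[of V EG v] by simp
    then show "vtx v \<in> (psi V EG \<circ> \<phi>) ` sphere 0 1" using z(1) by (metis image_eqI)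
  qed
  have "hamiltonian_circle V EG ((psi V EG \<circ> \<phi>) ` sphere 0 1)"
    unfolding hamiltonian_circle_def using e2 allv2 by blast
  then show ?thesis by blast
qed

end
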